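(* Let $n\ge 2$ be an integer and let $(x_0,y_0),\dots,(x_n,y_n)\in\mathbb{R}^2$ with $a:=x_0<x_1<\dots<x_n=:b$. For each $k\in\{1,\dots,n\}$ fix $d_k\in[0,1)$ and put \[ a_k=\frac{x_k-x_{k-1}}{x_n-x_0},\quad b_k=\frac{x_nx_{k-1}-x_0x_k}{x_n-x_0},\quad c_k=\frac{y_k-y_{k-1}}{x_n-x_0}-d_k\frac{y_n-y_0}{x_n-x_0},\quad e_k=\frac{x_ny_{k-1}-x_0y_k}{x_n-x_0}-d_k\frac{x_ny_0-x_0y_n}{x_n-x_0}, \] and $f_k(x,y)=(a_kx+b_k,\;c_kx+d_ky+e_k)$ for $(x,y)\in\mathbb{R}^2$. Let $\theta=1$ if $c_1=\dots=c_n=0$ and $\theta=\dfrac{1-\max_k a_k}{2\max_k|c_k|}$ otherwise. Let $f:[a,b]\to\mathbb{R}$ be the affine fractal interpolation function associated with these data, and $G_f=\{(x,f(x)):x\in[a,b]\}$ its graph. For $k\in\{1,\dots,n\}$ set \[ \gamma_k=\left(\frac{b_k}{1-a_k},\ \frac{b_kc_k}{(1-a_k)(1-d_k)}+\frac{e_k}{1-d_k}\right),\qquad s_k=\max\{a_k+\theta|c_k|,\,d_k\}, \] and \[ M=\max_{i,j\in\{1,\dots,n\}}\left\{\left|\frac{b_i}{1-a_i}-\frac{b_j}{1-a_j}\right|+\theta\left|\frac{c_ib_i}{(1-a_i)(1-d_i)}+\frac{e_i}{1-d_i}-\frac{c_jb_j}{(1-a_j)(1-d_j)}-\frac{e_j}{1-d_j}\right|\right\}.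 \] Let $\sigma$ be a permutation of $\{1,\dots,n\}$ with $s_{\sigma(1)}\le s_{\sigma(2)}\le\dots\le s_{\sigma(n)}$. Then \[ G_f\subseteq\left(\bigcup_{j=1}^{n-1}R\!\left[\gamma_{\sigma(j)},\,Ms_{\sigma(j)}\frac{1+s_{\sigma(n)}}{1-s_{\sigma(n-1)}s_{\sigma(n)}}\right]\right)\cup R\!\left[\gamma_{\sigma(n)},\,Ms_{\sigma(n)}\frac{1+s_{\sigma(n-1)}}{1-s_{\sigma(n-1)}s_{\sigma(n)}}\right]. \]
   Context: For $(x,y)\in\mathbb{R}^2$ and $r\ge0$, $R[(x,y),r]=\{(u,v)\in\mathbb{R}^2: |x-u|+\theta|y-v|\le r\}$ (the closed ball of radius $r$ for the metric $\rho((u_1,v_1),(u_2,v_2))=|u_1-u_2|+\theta|v_1-v_2|$; it is the filled rhombus with vertices $(x\pm r,y)$, $(x,y\pm r/\theta)$). The maps $f_k$ are contractions for $\rho$, and the attractor of the iterated function system $\{f_1,\dots,f_n\}$ is the unique nonempty compact set $K\subseteq\mathbb{R}^2$ with $K=\bigcup_{k=1}^n f_k(K)$. The affine fractal interpolation function is the continuous function $f:[a,b]\to\mathbb{R}$ with $f(x_k)=y_k$ for all $k\in\{0,\dots,n\}$ whose graph $G_f$ equals this attractor. Note $\gamma_k$ is the unique fixed point of $f_k$ and $s_k$ is the Lipschitz constant of $f_k$ with respect to $\rho$. *)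

theory Defs
  imports "HOL-Analysis.Analysis"
begin

definition fia :: "nat \<Rightarrow> (nat \<Rightarrow> real) \<Rightarrow> nat \<Rightarrow> real" where
  "fia n x k = (x k - x (k-1)) / (x n - x 0)"

definition fib :: "nat \<Rightarrow> (nat \<Rightarrow> real) \<Rightarrow> nat \<Rightarrow> real" where
  "fib n x k = (x n * x (k-1) - x 0 * x k) / (x n - x 0)"

definition fic :: "nat \<Rightarrow> (nat \<Rightarrow> real) \<Rightarrow> (nat \<Rightarrow> real) \<Rightarrow> (nat \<Rightarrow> real) \<Rightarrow> nat \<Rightarrow> real" where
  "fic n x y d k = (y k - y (k-1)) / (x n - x 0) - d k * (y n - y 0) / (x n - x 0)"

definition fie :: "nat \<Rightarrow> (nat \<Rightarrow> real) \<Rightarrow> (nat \<Rightarrow> real) \<Rightarrow> (nat \<Rightarrow> real) \<Rightarrow> nat \<Rightarrow> real" where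
  "fie n x y d k = (x n * y (k-1) - x 0 * y k) / (x n - x 0)
                   - d k * (x n * y 0 - x 0 * y n) / (x n - x 0)"

definition fimap :: "nat \<Rightarrow> (nat \<Rightarrow> real) \<Rightarrow> (nat \<Rightarrow> real) \<Rightarrow> (nat \<Rightarrow> real) \<Rightarrow> nat
    \<Rightarrow> real \<times> real \<Rightarrow> real \<times> real" where
  "fimap n x y d k p = (fia n x k * fst p + fib n x k,
                        fic n x y d k * fst p + d k * snd p + fie n x y d k)"

definition fitheta :: "nat \<Rightarrow> (nat \<Rightarrow> real) \<Rightarrow> (nat \<Rightarrow> real) \<Rightarrow> (nat \<Rightarrow> real) \<Rightarrow> real" where
  "fitheta n x y d =
     (if (\<forall>k\<in>{1..n}. fic n x y d k = 0) then 1
      else (1 - Max (fia n x ` {1..n})) / (2 * Max ((\<lambda>k. \<bar>fic n x y d k\<bar>) ` {1..n})))"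

definition rball :: "real \<Rightarrow> real \<times> real \<Rightarrow> real \<Rightarrow> (real \<times> real) set" where
  "rball \<theta> p r = {q. \<bar>fst p - fst q\<bar> + \<theta> * \<bar>snd p - snd q\<bar> \<le> r}"

definition figamma :: "nat \<Rightarrow> (nat \<Rightarrow> real) \<Rightarrow> (nat \<Rightarrow> real) \<Rightarrow> (nat \<Rightarrow> real) \<Rightarrow> nat \<Rightarrow> real \<times> real" where
  "figamma n x y d k =
     (fib n x k / (1 - fia n x k),
      fib n x k * fic n x y d k / ((1 - fia n x k) * (1 - d k)) + fie n x y d k / (1 - d k))"

definition fis :: "nat \<Rightarrow> (nat \<Rightarrow> real) \<Rightarrow> (nat \<Rightarrow> real) \<Rightarrow> (nat \<Rightarrow> real) \<Rightarrow> nat \<Rightarrow> real" where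
  "fis n x y d k = max (fia n x k + fitheta n x y d * \<bar>fic n x y d k\<bar>) (d k)"

definition fiM :: "nat \<Rightarrow> (nat \<Rightarrow> real) \<Rightarrow> (nat \<Rightarrow> real) \<Rightarrow> (nat \<Rightarrow> real) \<Rightarrow> real" where
  "fiM n x y d = Max ((\<lambda>(i,j).
      \<bar>fib n x i / (1 - fia n x i) - fib n x j / (1 - fia n x j)\<bar>
      + fitheta n x y d *
        \<bar>fic n x y d i * fib n x i / ((1 - fia n x i) * (1 - d i)) + fie n x y d i / (1 - d i)
         - fic n x y d j * fib n x j / ((1 - fia n x j) * (1 - d j)) - fie n x y d j / (1 - d j)\<bar>)
      ` ({1..n} \<times> {1..n}))"

end

theory Submission
  imports Defs
begin

lemma abstract_bound:
  fixes K :: "(real\<times>real) set" and F :: "nat \<Rightarrow> real\<times>real \<Rightarrow> real\<times>real"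
    and \<gamma> :: "nat \<Rightarrow> real\<times>real" and s :: "nat \<Rightarrow> real"
    and \<rho> :: "real\<times>real \<Rightarrow> real\<times>real \<Rightarrow> real" and M S S' :: real and I :: "nat set" and tp :: nat
  assumes fin: "finite I" and tp: "tp \<in> I" and ne: "I - {tp} \<noteq> {}"
    and KF: "K = (\<Union>k\<in>I. F k ` K)"
    and lip: "\<forall>k\<in>I. \<forall>p q. \<rho> (F k p) (F k q) \<le> s k * \<rho> p q"
    and fixF: "\<forall>k\<in>I. F k (\<gamma> k) = \<gamma> k"
    and Mb: "\<forall>i\<in>I. \<forall>j\<in>I. \<rho> (\<gamma> i) (\<gamma> j) \<le> M"
    and tri: "\<forall>p q r. \<rho> p r \<le> \<rho> p q + \<rho> q r"
    and nn: "\<forall>p q. 0 \<le> \<rho> p q"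
    and sym: "\<forall>p q. \<rho> p q = \<rho> q p"
    and srange: "\<forall>k\<in>I. 0 \<le> s k \<and> s k < 1"
    and sS: "\<forall>k\<in>I. s k \<le> S" and Stop: "s tp = S"
    and sS': "\<forall>k\<in>I-{tp}. s k \<le> S'" and S'nn: "0 \<le> S'" and S'S: "S' \<le> S"
    and S'1: "S' < 1"
    and att: "\<forall>i\<in>I. \<exists>p\<in>K. \<forall>q\<in>K. \<rho> q (\<gamma> i) \<le> \<rho> p (\<gamma> i)"
  shows "\<forall>p\<in>K. (\<exists>i\<in>I-{tp}. \<rho> (\<gamma> i) p \<le> M * s i * (1 + S) / (1 - S * S'))
                 \<or> \<rho> (\<gamma> tp) p \<le> M * S * (1 + S') / (1 - S * S')"
proof -
  have S1: "S < 1" using srange tp Stop by auto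
  have S0: "0 \<le> S" using srange tp Stop by auto
  have D: "0 < 1 - S * S'" using S1 S'1 S0 S'nn
  proof -
    have "S * S' \<le> S * 1" using S0 S'1 by (intro mult_left_mono) auto
    then show ?thesis using S1 by linarith
  qed
  have M0: "0 \<le> M" using Mb tp nn by (meson order.trans)
  obtain pm where pm: "\<forall>i\<in>I. pm i \<in> K \<and> (\<forall>q\<in>K. \<rho> q (\<gamma> i) \<le> \<rho> (pm i) (\<gamma> i))"
    using att by metis
  define r where "r i = \<rho> (pm i) (\<gamma> i)" for i
  have rK: "\<rho> q (\<gamma> i) \<le> r i" if "i \<in> I" "q \<in> K" for i q
    using pm that r_def by auto
  have r0: "0 \<le> r i" for i unfolding r_def using nn by blast
  have key: "r i \<le> 0 \<or> (\<exists>k\<in>I. k \<noteq> i \<and> r i \<le> M + s k * r k)" if i: "i \<in> I" for i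
  proof -
    have "pm i \<in> K" using pm i by auto
    then obtain k q where k: "k \<in> I" "q \<in> K" "pm i = F k q" using KF by blast
    show ?thesis
    proof (cases "k = i")
      case True
      have "r i = \<rho> (F i q) (F i (\<gamma> i))" using k True fixF i r_def by simp
      also have "\<dots> \<le> s i * \<rho> q (\<gamma> i)" using lip i by blast
      also have "\<dots> \<le> s i * r i" using rK[OF i k(2)] srange i by (simp add: mult_left_mono)
      finally have "r i \<le> s i * r i" .
      then have "(1 - s i) * r i \<le> 0" by (simp add: algebra_simps)
      then have "r i \<le> 0" using srange i
        by (smt (verit) mult_pos_pos)
      then show ?thesis by simp
    next
      case False
      have "r i = \<rho> (F k q) (\<gamma> i)" using k r_def by simp
      also have "\<dots> \<le> \<rho> (F k q) (\<gamma> k) + \<rho> (\<gamma> k) (\<gamma> i)" using tri by blast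
      also have "\<rho> (F k q) (\<gamma> k) = \<rho> (F k q) (F k (\<gamma> k))" using fixF k by simp
      also have "\<dots> \<le> s k * \<rho> q (\<gamma> k)" using lip k by blast
      also have "\<dots> \<le> s k * r k" using rK[OF k(1) k(2)] srange k by (simp add: mult_left_mono)
      finally have "r i \<le> s k * r k + \<rho> (\<gamma> k) (\<gamma> i)" by simp
      then have "r i \<le> M + s k * r k" using Mb k i by fastforce
      then show ?thesis using False k by blast
    qed
  qed
  define Y where "Y = Max (r ` (I - {tp}))"
  define X where "X = r tp"
  have Yge: "r k \<le> Y" if "k \<in> I - {tp}" for k
    unfolding Y_def using fin that by (intro Max_ge) auto
  have Yin: "Y \<in> r ` (I - {tp})" unfolding Y_def using fin ne by (intro Max_in) auto
  have Y0: "0 \<le> Y" using Yin r0 by auto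
  have h1: "X \<le> M + S' * Y"
  proof -
    from key[OF tp] show ?thesis
    proof
      assume "r tp \<le> 0" then show ?thesis unfolding X_def using M0 S'nn Y0 by (smt (verit) mult_nonneg_nonneg)
    next
      assume "\<exists>k\<in>I. k \<noteq> tp \<and> r tp \<le> M + s k * r k"
      then obtain k where k: "k \<in> I" "k \<noteq> tp" "r tp \<le> M + s k * r k" by blast
      have "s k * r k \<le> S' * Y" using sS' k Yge[of k] srange r0 S'nn
        by (intro mult_mono) auto
      then show ?thesis using k X_def by simp
    qed
  qed
  have h2: "Y \<le> M + S * X \<or> Y \<le> M + S' * Y"
  proof -
    obtain i where i: "i \<in> I - {tp}" "Y = r i" using Yin by auto
    have "i \<in> I" using i by auto
    from key[OF this] show ?thesis
    proof
      assume "r i \<le> 0" then show ?thesis using i M0 S'nn Y0 by (smt (verit) mult_nonneg_nonneg)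
    next
      assume "\<exists>k\<in>I. k \<noteq> i \<and> r i \<le> M + s k * r k"
      then obtain k where k: "k \<in> I" "k \<noteq> i" "r i \<le> M + s k * r k" by blast
      show ?thesis
      proof (cases "k = tp")
        case True
        then show ?thesis using k i X_def Stop by simp
      next
        case False
        have "s k * r k \<le> S' * Y" using sS' k False Yge[of k] srange r0 S'nn
          by (intro mult_mono) auto
        then show ?thesis using k i by simp
      qed
    qed
  qed
  define A where "A = M * (1 + S) / (1 - S * S')"
  define B where "B = M * (1 + S') / (1 - S * S')"
  have AB: "Y \<le> A \<and> X \<le> B"
    using h2
  proof
    assume a: "Y \<le> M + S * X"
    have "S * X \<le> S * (M + S' * Y)" using h1 S0 by (simp add: mult_left_mono)
    then have "Y * (1 - S * S') \<le> M * (1 + S)" using a by (simp add: algebra_simps)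
    then have YA: "Y \<le> A" unfolding A_def using D by (simp add: pos_le_divide_eq)
    have "S' * Y \<le> S' * A" using YA S'nn by (simp add: mult_left_mono)
    then have "X \<le> M + S' * A" using h1 by simp
    also have "M + S' * A = B" unfolding A_def B_def using D by (simp add: field_simps)
    finally show ?thesis using YA by simp
  next
    assume a: "Y \<le> M + S' * Y"
    then have "Y * (1 - S') \<le> M" by (simp add: algebra_simps)
    then have Y1: "Y \<le> M / (1 - S')" using S'1 by (simp add: pos_le_divide_eq)
    have "S' * Y \<le> S' * (M / (1 - S'))" using Y1 S'nn by (rule mult_left_mono)
    then have "X \<le> M + S' * (M / (1 - S'))" using h1 by simp
    also have "\<dots> = M / (1 - S')" using S'1 by (simp add: field_simps)
    finally have X1: "X \<le> M / (1 - S')" .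
    have "M * (1 - S * S') \<le> M * ((1 + S) * (1 - S'))"
      using M0 S'S S'nn by (intro mult_left_mono) (auto simp: algebra_simps)
    then have q1: "M / (1 - S') \<le> A" unfolding A_def using D S'1
      by (simp add: divide_simps algebra_simps)
    have "M * (1 - S * S') \<le> M * ((1 + S') * (1 - S'))"
      using M0 S'S S'nn by (intro mult_left_mono) (auto simp: algebra_simps intro: mult_right_mono)
    then have q2: "M / (1 - S') \<le> B" unfolding B_def using D S'1
      by (simp add: divide_simps algebra_simps)
    show ?thesis using X1 Y1 q1 q2 by linarith
  qed
  show ?thesis
  proof
    fix p assume "p \<in> K"
    then obtain i q where iq: "i \<in> I" "q \<in> K" "p = F i q" using KF by blast
    have "\<rho> (\<gamma> i) p = \<rho> (F i (\<gamma> i)) (F i q)" using iq fixF by simp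
    also have "\<dots> \<le> s i * \<rho> (\<gamma> i) q" using lip iq by blast
    also have "\<dots> \<le> s i * r i" using rK[OF iq(1) iq(2)] sym[rule_format, of "\<gamma> i" q] srange iq by (simp add: mult_left_mono)
    finally have pr: "\<rho> (\<gamma> i) p \<le> s i * r i" .
    show "(\<exists>i\<in>I-{tp}. \<rho> (\<gamma> i) p \<le> M * s i * (1 + S) / (1 - S * S'))
                 \<or> \<rho> (\<gamma> tp) p \<le> M * S * (1 + S') / (1 - S * S')"
    proof (cases "i = tp")
      case True
      have "s i * r i \<le> S * B" using True Stop AB X_def S0 by (simp add: mult_left_mono)
      also have "S * B = M * S * (1 + S') / (1 - S * S')" unfolding B_def by simp
      finally show ?thesis using pr True by simp
    next
      case False
      have "r i \<le> A" using Yge[of i] False iq AB by auto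
      then have "s i * r i \<le> s i * A" using srange iq by (simp add: mult_left_mono)
      also have "s i * A = M * s i * (1 + S) / (1 - S * S')" unfolding A_def by simp
      finally have "\<rho> (\<gamma> i) p \<le> M * s i * (1 + S) / (1 - S * S')" using pr by linarith
      then show ?thesis using False iq by blast
    qed
  qed
qed

lemma aff_lip:
  fixes a b c dd e th u v uu vv :: real
  assumes "0 \<le> a" "0 \<le> th" "0 \<le> dd"
  shows "\<bar>(a * u + b) - (a * uu + b)\<bar> + th * \<bar>(c * u + dd * v + e) - (c * uu + dd * vv + e)\<bar>
     \<le> max (a + th*\<bar>c\<bar>) dd * (\<bar>u - uu\<bar> + th * \<bar>v - vv\<bar>)"
proof -
  have e1: "\<bar>(a * u + b) - (a * uu + b)\<bar> = a * \<bar>u - uu\<bar>"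
    using assms by (simp add: abs_mult flip: right_diff_distrib)
  have "\<bar>(c * u + dd * v + e) - (c * uu + dd * vv + e)\<bar> = \<bar>c*(u-uu) + dd*(v-vv)\<bar>"
    by (simp add: algebra_simps)
  also have "\<dots> \<le> \<bar>c\<bar>*\<bar>u-uu\<bar> + dd*\<bar>v-vv\<bar>"
    using assms abs_triangle_ineq[of "c*(u-uu)" "dd*(v-vv)"] by (simp add: abs_mult)
  finally have e2: "th * \<bar>(c * u + dd * v + e) - (c * uu + dd * vv + e)\<bar> \<le> th*(\<bar>c\<bar>*\<bar>u-uu\<bar>) + th*(dd*\<bar>v-vv\<bar>)"
    using assms by (metis distrib_left mult_left_mono)
  define m where "m = max (a + th*\<bar>c\<bar>) dd"
  have "(a + th*\<bar>c\<bar>) * \<bar>u-uu\<bar> \<le> m * \<bar>u-uu\<bar>" unfolding m_def by (intro mult_right_mono) auto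
  moreover have "dd * (th * \<bar>v-vv\<bar>) \<le> m * (th * \<bar>v-vv\<bar>)" unfolding m_def using assms by (intro mult_right_mono) auto
  ultimately show ?thesis using e1 e2 unfolding m_def[symmetric] by (simp add: algebra_simps)
qed

lemma aff_fix:
  fixes a b c dd e :: real
  assumes "a \<noteq> 1" "dd \<noteq> 1"
  shows "(a * (b/(1-a)) + b, c * (b/(1-a)) + dd * (b * c/((1-a)*(1-dd)) + e/(1-dd)) + e)
       = (b/(1-a), b * c/((1-a)*(1-dd)) + e/(1-dd))"
proof -
  have h1: "1 - a \<noteq> 0" "1 - dd \<noteq> 0" using assms by auto
  have f1: "a * (b/(1-a)) + b = b/(1-a)" using h1 by (simp add: field_simps)
  define u where "u = b/(1-a)"
  have bu: "b*c/((1-a)*(1-dd)) = c*u/(1-dd)" unfolding u_def by simp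
  define z where "z = c * u + e"
  have "z + dd * (z/(1-dd)) = z/(1-dd)" using h1 by (simp add: field_simps)
  then have "c * u + dd * (c*u/(1-dd) + e/(1-dd)) + e = c*u/(1-dd) + e/(1-dd)"
    unfolding z_def by (simp add: add_divide_distrib algebra_simps)
  then have f2: "c * (b/(1-a)) + dd * (b*c/((1-a)*(1-dd)) + e/(1-dd)) + e
       = b*c/((1-a)*(1-dd)) + e/(1-dd)" unfolding bu u_def .
  show ?thesis using f1 f2 by simp
qed

lemma xmono:
  fixes x :: "nat \<Rightarrow> real"
  assumes "\<forall>k<n. x k < x (Suc k)"
  shows "j < k \<Longrightarrow> k \<le> n \<Longrightarrow> x j < x k"
proof (induction k)
  case 0 then show ?case by simp
next
  case (Suc k)
  have "x k < x (Suc k)" using assms Suc.prems by auto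
  then show ?case using Suc by (cases "j = k") auto
qed

theorem theorem3p1:
  fixes n :: nat and x y d :: "nat \<Rightarrow> real" and f :: "real \<Rightarrow> real" and \<sigma> :: "nat \<Rightarrow> nat"
  assumes n2: "n \<ge> 2"
    and xinc: "\<forall>k<n. x k < x (Suc k)"
    and drange: "\<forall>k\<in>{1..n}. 0 \<le> d k \<and> d k < 1"
    and fcont: "continuous_on {x 0..x n} f"
    and finterp: "\<forall>k\<le>n. f (x k) = y k"
    and fattr: "(\<lambda>t. (t, f t)) ` {x 0..x n}
                  = (\<Union>k\<in>{1..n}. fimap n x y d k ` ((\<lambda>t. (t, f t)) ` {x 0..x n}))"
    and sperm: "\<sigma> permutes {1..n}"
    and ssort: "\<forall>i j. 1 \<le> i \<and> i \<le> j \<and> j \<le> n \<longrightarrow> fis n x y d (\<sigma> i) \<le> fis n x y d (\<sigma> j)"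
  shows "(\<lambda>t. (t, f t)) ` {x 0..x n}
    \<subseteq> (\<Union>j\<in>{1..n-1}. rball (fitheta n x y d) (figamma n x y d (\<sigma> j))
           (fiM n x y d * fis n x y d (\<sigma> j) * (1 + fis n x y d (\<sigma> n))
             / (1 - fis n x y d (\<sigma> (n-1)) * fis n x y d (\<sigma> n))))
      \<union> rball (fitheta n x y d) (figamma n x y d (\<sigma> n))
           (fiM n x y d * fis n x y d (\<sigma> n) * (1 + fis n x y d (\<sigma> (n-1)))
             / (1 - fis n x y d (\<sigma> (n-1)) * fis n x y d (\<sigma> n)))"
proof -
  define I where "I = {1..n}"
  define \<theta> where "\<theta> = fitheta n x y d"
  define \<rho> where "\<rho> = (\<lambda>p q :: real \<times> real. \<bar>fst p - fst q\<bar> + \<theta> * \<bar>snd p - snd q\<bar>)"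
  define K where "K = (\<lambda>t. (t, f t)) ` {x 0..x n}"
  define tp where "tp = \<sigma> n"
  define S where "S = fis n x y d (\<sigma> n)"
  define S' where "S' = fis n x y d (\<sigma> (n-1))"
  define M where "M = fiM n x y d"
  have finI: "finite I" unfolding I_def by simp
  have x0n: "x 0 < x n" using xmono[OF xinc, of 0 n] n2 by simp
  have a01: "0 < fia n x k \<and> fia n x k < 1" if "k \<in> I" for k
  proof -
    have k: "1 \<le> k" "k \<le> n" using that I_def by auto
    have "x (k-1) < x k" using xmono[OF xinc, of "k-1" k] k by simp
    moreover have "x k - x (k-1) < x n - x 0"
    proof (cases "k = 1")
      case True
      then have "x 1 < x n" using xmono[OF xinc, of 1 n] n2 by simp
      then show ?thesis using True by simp
    next
      case False
      then have "x 0 < x (k-1)" using xmono[OF xinc, of 0 "k-1"] k by simp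
      moreover have "x k \<le> x n" using xmono[OF xinc, of k n] k by (cases "k = n") auto
      ultimately show ?thesis by simp
    qed
    ultimately show ?thesis unfolding fia_def using x0n by (simp add: divide_simps)
  qed
  define Am where "Am = Max (fia n x ` I)"
  define Cm where "Cm = Max ((\<lambda>k. \<bar>fic n x y d k\<bar>) ` I)"
  have In: "I \<noteq> {}" unfolding I_def using n2 by auto
  have Am1: "Am < 1" unfolding Am_def using Max_in[of "fia n x ` I"] finI In a01 by auto
  have Amge: "fia n x k \<le> Am" if "k \<in> I" for k unfolding Am_def using finI that by (intro Max_ge) auto
  have Cmge: "\<bar>fic n x y d k\<bar> \<le> Cm" if "k \<in> I" for k unfolding Cm_def using finI that by (intro Max_ge) auto
  have th: "0 < \<theta> \<and> (\<forall>k\<in>I. fia n x k + \<theta> * \<bar>fic n x y d k\<bar> < 1)"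
  proof (cases "\<forall>k\<in>{1..n}. fic n x y d k = 0")
    case True
    then have "\<theta> = 1" unfolding \<theta>_def fitheta_def by simp
    then show ?thesis using True a01 I_def by auto
  next
    case False
    then have th: "\<theta> = (1 - Am) / (2 * Cm)" unfolding \<theta>_def fitheta_def Am_def Cm_def I_def by (simp only: if_not_P[OF False] if_False)
    obtain k0 where k0: "k0 \<in> I" "fic n x y d k0 \<noteq> 0" using False I_def by auto
    have Cm0: "0 < Cm" using Cmge[OF k0(1)] k0 by simp
    have thp: "0 < \<theta>" using th Cm0 Am1 by simp
    have "fia n x k + \<theta> * \<bar>fic n x y d k\<bar> < 1" if "k \<in> I" for k
    proof -
      have "\<theta> * \<bar>fic n x y d k\<bar> \<le> \<theta> * Cm" using thp Cmge[OF that] by (intro mult_left_mono) auto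
      also have "\<theta> * Cm = (1 - Am) / 2" using th Cm0 by simp
      finally have "\<theta> * \<bar>fic n x y d k\<bar> \<le> 1/2 - Am/2" by simp
      then show ?thesis using Amge[OF that] Am1 by linarith
    qed
    then show ?thesis using thp by auto
  qed
  have srange: "\<forall>k\<in>I. 0 \<le> fis n x y d k \<and> fis n x y d k < 1"
    using th drange unfolding fis_def I_def \<theta>_def[symmetric] by auto
  have permI: "\<exists>j\<in>I. k = \<sigma> j" if "k \<in> I" for k
    using permutes_image[OF sperm] that unfolding I_def by auto
  have sig_in: "\<sigma> j \<in> I" if "j \<in> I" for j
    using permutes_image[OF sperm] that unfolding I_def by auto
  have siginj: "inj \<sigma>" using permutes_inj[OF sperm] .
  have tpI: "tp \<in> I" unfolding tp_def using sig_in n2 I_def by auto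
  have s1I: "\<sigma> (n-1) \<in> I - {tp}"
    using sig_in[of "n-1"] n2 I_def tp_def siginj by (auto dest: injD)
  have sS: "\<forall>k\<in>I. fis n x y d k \<le> S"
  proof
    fix k assume "k \<in> I"
    then obtain j where "j \<in> I" "k = \<sigma> j" using permI by blast
    then show "fis n x y d k \<le> S" unfolding S_def using ssort I_def by auto
  qed
  have sS': "\<forall>k\<in>I-{tp}. fis n x y d k \<le> S'"
  proof
    fix k assume k: "k \<in> I - {tp}"
    then obtain j where j: "j \<in> I" "k = \<sigma> j" using permI by blast
    then have "j \<noteq> n" using k tp_def by auto
    then show "fis n x y d k \<le> S'" unfolding S'_def using ssort I_def j by auto
  qed
  have lip: "\<forall>k\<in>I. \<forall>p q. \<rho> (fimap n x y d k p) (fimap n x y d k q) \<le> fis n x y d k * \<rho> p q"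
  proof (intro ballI allI)
    fix k p q assume k: "k \<in> I"
    show "\<rho> (fimap n x y d k p) (fimap n x y d k q) \<le> fis n x y d k * \<rho> p q"
      unfolding \<rho>_def fimap_def fis_def \<theta>_def[symmetric]
      using aff_lip[where a="fia n x k" and b="fib n x k" and c="fic n x y d k" and dd="d k" and e="fie n x y d k" and th=\<theta> and u="fst p" and v="snd p" and uu="fst q" and vv="snd q"]
        a01[OF k] th drange k I_def by auto
  qed
  have fixF: "\<forall>k\<in>I. fimap n x y d k (figamma n x y d k) = figamma n x y d k"
  proof
    fix k assume k: "k \<in> I"
    have h1: "fia n x k \<noteq> 1" using a01[OF k] by auto
    have "d k < 1" using drange k unfolding I_def by blast
    then have h2: "d k \<noteq> 1" by simp
    show "fimap n x y d k (figamma n x y d k) = figamma n x y d k"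
      unfolding fimap_def figamma_def using aff_fix[OF h1 h2] by simp
  qed
  have Mb: "\<forall>i\<in>I. \<forall>j\<in>I. \<rho> (figamma n x y d i) (figamma n x y d j) \<le> M"
  proof (intro ballI)
    fix i j assume ij: "i \<in> I" "j \<in> I"
    show "\<rho> (figamma n x y d i) (figamma n x y d j) \<le> M"
    proof -
      have eq: "\<rho> (figamma n x y d i) (figamma n x y d j) = (\<lambda>(i,j).
      \<bar>fib n x i / (1 - fia n x i) - fib n x j / (1 - fia n x j)\<bar>
      + fitheta n x y d *
        \<bar>fic n x y d i * fib n x i / ((1 - fia n x i) * (1 - d i)) + fie n x y d i / (1 - d i)
         - fic n x y d j * fib n x j / ((1 - fia n x j) * (1 - d j)) - fie n x y d j / (1 - d j)\<bar>) (i,j)"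
        unfolding \<rho>_def figamma_def \<theta>_def by (simp add: mult.commute[of "fib n x i"] mult.commute[of "fib n x j"] diff_diff_eq)
      show ?thesis unfolding M_def fiM_def eq
        using ij I_def by (intro Max_ge) auto
    qed
  qed
  have tri: "\<forall>p q r. \<rho> p r \<le> \<rho> p q + \<rho> q r"
  proof (intro allI)
    fix p q r :: "real \<times> real"
    have a: "\<bar>fst p - fst r\<bar> \<le> \<bar>fst p - fst q\<bar> + \<bar>fst q - fst r\<bar>" by simp
    have "\<bar>snd p - snd r\<bar> \<le> \<bar>snd p - snd q\<bar> + \<bar>snd q - snd r\<bar>" by simp
    then have b: "\<theta> * \<bar>snd p - snd r\<bar> \<le> \<theta> * \<bar>snd p - snd q\<bar> + \<theta> * \<bar>snd q - snd r\<bar>"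
      using th by (metis distrib_left less_imp_le mult_left_mono)
    show "\<rho> p r \<le> \<rho> p q + \<rho> q r" unfolding \<rho>_def using a b by simp
  qed
  have nn: "\<forall>p q. 0 \<le> \<rho> p q" unfolding \<rho>_def using th by auto
  have sym: "\<forall>p q. \<rho> p q = \<rho> q p" unfolding \<rho>_def by (simp add: abs_minus_commute)
  have att: "\<forall>i\<in>I. \<exists>p\<in>K. \<forall>q\<in>K. \<rho> q (figamma n x y d i) \<le> \<rho> p (figamma n x y d i)"
  proof
    fix i assume "i \<in> I"
    have "continuous_on {x 0..x n} (\<lambda>t. \<rho> (t, f t) (figamma n x y d i))"
      unfolding \<rho>_def by (auto intro!: continuous_intros fcont)
    moreover have "compact {x 0..x n}" by simp
    moreover have "{x 0..x n} \<noteq> {}" using x0n by simp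
    ultimately obtain t where "t \<in> {x 0..x n}" "\<forall>u\<in>{x 0..x n}. \<rho> (u, f u) (figamma n x y d i) \<le> \<rho> (t, f t) (figamma n x y d i)"
      using continuous_attains_sup[of "{x 0..x n}" "\<lambda>t. \<rho> (t, f t) (figamma n x y d i)"] by blast
    then show "\<exists>p\<in>K. \<forall>q\<in>K. \<rho> q (figamma n x y d i) \<le> \<rho> p (figamma n x y d i)"
      unfolding K_def by blast
  qed
  have main: "\<forall>p\<in>K. (\<exists>i\<in>I-{tp}. \<rho> (figamma n x y d i) p \<le> M * fis n x y d i * (1 + S) / (1 - S * S'))
                 \<or> \<rho> (figamma n x y d tp) p \<le> M * S * (1 + S') / (1 - S * S')"
  proof (rule abstract_bound[of I tp K "fimap n x y d" \<rho> "fis n x y d" "figamma n x y d" M S S'])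
    show "K = (\<Union>k\<in>I. fimap n x y d k ` K)" using fattr unfolding K_def I_def .
    show "fis n x y d tp = S" unfolding tp_def S_def ..
    show "0 \<le> S'" unfolding S'_def using srange s1I by blast
    show "S' \<le> S" unfolding S'_def S_def using ssort n2 by auto
    show "S' < 1" unfolding S'_def using srange s1I by blast
  qed (use finI tpI s1I lip fixF Mb tri nn sym srange sS sS' att in auto)
  have rb: "q \<in> rball (fitheta n x y d) g r \<longleftrightarrow> \<rho> g q \<le> r" for q g r
    unfolding rball_def \<rho>_def \<theta>_def by simp
  show ?thesis
  proof
    fix p assume pK: "p \<in> (\<lambda>t. (t, f t)) ` {x 0..x n}"
    then have "p \<in> K" unfolding K_def .
    from main[rule_format, OF this] show "p \<in> (\<Union>j\<in>{1..n-1}. rball (fitheta n x y d) (figamma n x y d (\<sigma> j))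
           (fiM n x y d * fis n x y d (\<sigma> j) * (1 + fis n x y d (\<sigma> n))
             / (1 - fis n x y d (\<sigma> (n-1)) * fis n x y d (\<sigma> n))))
      \<union> rball (fitheta n x y d) (figamma n x y d (\<sigma> n))
           (fiM n x y d * fis n x y d (\<sigma> n) * (1 + fis n x y d (\<sigma> (n-1)))
             / (1 - fis n x y d (\<sigma> (n-1)) * fis n x y d (\<sigma> n)))"
    proof
      assume "\<exists>i\<in>I-{tp}. \<rho> (figamma n x y d i) p \<le> M * fis n x y d i * (1 + S) / (1 - S * S')"
      then obtain i where i: "i \<in> I - {tp}" "\<rho> (figamma n x y d i) p \<le> M * fis n x y d i * (1 + S) / (1 - S * S')" by blast
      obtain j where j: "j \<in> I" "i = \<sigma> j" using permI i by blast
      have "j \<in> {1..n-1}" using j i tp_def I_def by (cases "j = n") auto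
      moreover have "p \<in> rball (fitheta n x y d) (figamma n x y d (\<sigma> j))
           (fiM n x y d * fis n x y d (\<sigma> j) * (1 + fis n x y d (\<sigma> n))
             / (1 - fis n x y d (\<sigma> (n-1)) * fis n x y d (\<sigma> n)))"
        unfolding rb using i(2)[unfolded mult.commute[of S S']] j unfolding M_def S_def S'_def by simp
      ultimately show ?thesis by blast
    next
      assume "\<rho> (figamma n x y d tp) p \<le> M * S * (1 + S') / (1 - S * S')"
      then have "\<rho> (figamma n x y d tp) p \<le> M * S * (1 + S') / (1 - S' * S)" by (simp only: mult.commute[of S S'])
      then have "p \<in> rball (fitheta n x y d) (figamma n x y d (\<sigma> n))
           (fiM n x y d * fis n x y d (\<sigma> n) * (1 + fis n x y d (\<sigma> (n-1)))
             / (1 - fis n x y d (\<sigma> (n-1)) * fis n x y d (\<sigma> n)))"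
        unfolding rb tp_def M_def S_def S'_def by simp
      then show ?thesis by blast
    qed
  qed
qed

end
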